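(* For any frame $L$, $\overline{\mathrm{H}}(L)$ is order-isomorphic to $\overline{\mathrm{C}}(\mathfrak{B}(L))$.
   Context: $\mathbb{Q}$ is the rationals; $a^\ast$ is the pseudocomplement. $\mathfrak{B}(L)=\{a\in L\mid a=a^{\ast\ast}\}$ is the Booleanization of $L$, a complete Boolean algebra (a frame). The frame $\mathfrak{L}(\overline{\mathbb{IR}})$ is presented by generators $(r,\textsf{---})$, $(\textsf{---},s)$ ($r,s\in\mathbb{Q}$) subject to (r1) $(r,\textsf{---})\wedge(\textsf{---},s)=0$ whenever $r\ge s$; (r3) $(r,\textsf{---})=\bigvee_{s>r}(s,\textsf{---})$; (r4) $(\textsf{---},s)=\bigvee_{r<s}(\textsf{---},r)$. For a frame $M$, $\overline{\mathrm{IC}}(M)$ is the set of frame homomorphisms $\mathfrak{L}(\overline{\mathbb{IR}})\to M$, ordered by $f\le g$ iff $f(r,\textsf{---})\le g(r,\textsf{---})$ and $g(\textsf{---},s)\le f(\textsf{---},s)$ for all $r,s$; $\overline{\mathrm{C}}(M)$ is the subposet of those $f$ with $f(r,\textsf{---})\vee f(\textsf{---},s)=1$ whenever $r<s$; $\overline{\mathrm{H}}(M)$ is the subposet of those $f$ with $f(r,\textsf{---})^\ast\le f(\textsf{---},s)$ and $f(\textsf{---},s)^\ast\le f(r,\textsf{---})$ whenever $r<s$. *)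

theory Defs
  imports Main "HOL.Rat"
begin

definition frame_law :: "'a::complete_lattice itself \<Rightarrow> bool" where
  "frame_law _ \<longleftrightarrow> (\<forall>(a::'a) S. inf a (Sup S) = Sup ((\<lambda>s. inf a s) ` S))"

definition pcomp :: "'a::complete_lattice \<Rightarrow> 'a" where
  "pcomp a = Sup {x. inf x a = bot}"

definition booleanization :: "'a::complete_lattice set" where
  "booleanization = {a. a = pcomp (pcomp a)}"

text \<open>For M = UNIV this is Sup;
  for M = B(L) it is the join of the frame B(L).\<close>
definition is_join_in :: "'a::complete_lattice set \<Rightarrow> 'a set \<Rightarrow> 'a \<Rightarrow> bool" where
  "is_join_in M S x \<longleftrightarrow> x \<in> M \<and> (\<forall>s\<in>S. s \<le> x) \<and> (\<forall>y\<in>M. (\<forall>s\<in>S. s \<le> y) \<longrightarrow> x \<le> y)"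

text \<open>A frame homomorphism f : L(IR-bar) \<rightarrow> M is determined by (and, by the universal
  property of the presentation, the same thing as) an assignment of the generators,
  up r = f(r,---), down s = f(---,s), respecting relations (r1), (r3), (r4),
  where 0 and joins are interpreted in the frame M.  M is given as a subset of a
  complete lattice (closed under finite meets, containing bot and top) with the
  induced order.\<close>
type_synonym 'a gen_assign = "(rat \<Rightarrow> 'a) \<times> (rat \<Rightarrow> 'a)"

definition ICbar :: "'a::complete_lattice set \<Rightarrow> 'a gen_assign set" where
  "ICbar M = {(up, down).
      (\<forall>r. up r \<in> M) \<and> (\<forall>s. down s \<in> M) \<and>
      (\<forall>r s. s \<le> r \<longrightarrow> inf (up r) (down s) = bot) \<and>
      (\<forall>r. is_join_in M {up s | s. s > r} (up r)) \<and>
      (\<forall>s. is_join_in M {down r | r. r < s} (down s))}"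

definition ic_le :: "'a::order gen_assign \<Rightarrow> 'a gen_assign \<Rightarrow> bool" where
  "ic_le f g \<longleftrightarrow> (\<forall>r. fst f r \<le> fst g r) \<and> (\<forall>s. snd g s \<le> snd f s)"

definition Cbar :: "'a::complete_lattice set \<Rightarrow> 'a gen_assign set" where
  "Cbar M = {f \<in> ICbar M. \<forall>r s. r < s \<longrightarrow> is_join_in M {fst f r, snd f s} top}"

definition Hbar :: "'a::complete_lattice gen_assign set" where
  "Hbar = {f \<in> ICbar UNIV. \<forall>r s. r < s \<longrightarrow>
             pcomp (fst f r) \<le> snd f s \<and> pcomp (snd f s) \<le> fst f r}"

definition order_isomorphic :: "'a::order gen_assign set \<Rightarrow> 'a gen_assign set \<Rightarrow> bool" where
  "order_isomorphic A B \<longleftrightarrow> (\<exists>\<phi>. bij_betw \<phi> A B \<and>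
      (\<forall>f\<in>A. \<forall>g\<in>A. ic_le f g \<longleftrightarrow> ic_le (\<phi> f) (\<phi> g)))"

end

theory Submission
  imports Defs
begin

definition phi :: "'a::complete_lattice gen_assign \<Rightarrow> 'a gen_assign" where
  "phi f = (\<lambda>r. pcomp (pcomp (fst f r)), \<lambda>s. pcomp (pcomp (snd f s)))"

definition psi :: "'a::complete_lattice gen_assign \<Rightarrow> 'a gen_assign" where
  "psi g = (\<lambda>r. Sup {pcomp (snd g t) | t. r < t}, \<lambda>s. Sup {pcomp (fst g t) | t. t < s})"

lemma join_unique:
  assumes "is_join_in M S x" "is_join_in M S y" shows "x = y"
  using assms unfolding is_join_in_def by (meson antisym)

lemma join_UNIV: "is_join_in UNIV S x \<longleftrightarrow> x = Sup S"
  unfolding is_join_in_def by (auto intro: Sup_upper Sup_least antisym)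

context
  assumes FL: "frame_law TYPE('a::complete_lattice)"
begin

lemma fl: "inf (a::'a) (Sup S) = Sup ((\<lambda>s. inf a s) ` S)"
  using FL unfolding frame_law_def by blast

lemma pc_iff: "(x::'a) \<le> pcomp a \<longleftrightarrow> inf x a = bot"
proof
  assume "x \<le> pcomp a"
  hence "inf x a \<le> inf (pcomp a) a" by (rule inf_mono) simp
  also have "inf (pcomp a) a = inf a (pcomp a)" by (simp add: inf_commute)
  also have "\<dots> = Sup ((\<lambda>s. inf a s) ` {x. inf x a = bot})" unfolding pcomp_def by (rule fl)
  also have "\<dots> \<le> bot" by (rule SUP_least) (simp add: inf_commute)
  finally show "inf x a = bot" by (simp add: bot_unique)
next
  assume "inf x a = bot" thus "x \<le> pcomp a" unfolding pcomp_def by (simp add: Sup_upper)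
qed

lemma pc_inf1: "inf (a::'a) (pcomp a) = bot"
  using pc_iff[of "pcomp a" a] by (simp add: inf_commute)

lemma pc_inf2: "inf (pcomp a) (a::'a) = bot"
  using pc_iff[of "pcomp a" a] by simp

lemma pc_anti: "(a::'a) \<le> b \<Longrightarrow> pcomp b \<le> pcomp a"
proof -
  assume "a \<le> b"
  hence "inf (pcomp b) a \<le> inf (pcomp b) b" by (rule inf_mono[OF order_refl])
  hence "inf (pcomp b) a = bot" using pc_inf2[of b] by (simp add: bot_unique)
  thus ?thesis by (simp add: pc_iff)
qed

lemma pc_incr: "(a::'a) \<le> pcomp (pcomp a)"
  using pc_iff pc_inf1 by blast

lemma pc3: "pcomp (pcomp (pcomp (a::'a))) = pcomp a"
  by (rule antisym) (simp_all add: pc_anti pc_incr)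

lemma pp_mono: "(a::'a) \<le> b \<Longrightarrow> pcomp (pcomp a) \<le> pcomp (pcomp b)"
  by (simp add: pc_anti)

lemma pc_Sup_iff: "(x::'a) \<le> pcomp (Sup S) \<longleftrightarrow> (\<forall>s\<in>S. x \<le> pcomp s)"
  by (simp add: pc_iff fl)

lemma pc_disj: "inf (a::'a) b = bot \<Longrightarrow> inf (pcomp (pcomp a)) (pcomp (pcomp b)) = bot"
proof -
  assume "inf a b = bot"
  hence "b \<le> pcomp a" by (simp add: pc_iff inf_commute)
  hence "pcomp (pcomp b) \<le> pcomp a" using pp_mono pc3 by metis
  hence "inf (pcomp (pcomp a)) (pcomp (pcomp b)) \<le> inf (pcomp (pcomp a)) (pcomp a)"
    by (rule inf_mono[OF order_refl])
  thus ?thesis using pc_inf2[of "pcomp a"] by (simp add: bot_unique)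
qed

lemma pc_bot: "pcomp (bot::'a) = top"
  by (simp add: pc_iff top_unique[symmetric])

lemma pc_sup: "pcomp (sup (a::'a) b) = inf (pcomp a) (pcomp b)"
proof -
  have "x \<le> pcomp (sup a b) \<longleftrightarrow> x \<le> inf (pcomp a) (pcomp b)" for x
    using pc_Sup_iff[of x "{a,b}"] by simp
  thus ?thesis by (meson antisym order_refl)
qed

lemma pp_top_iff: "pcomp (pcomp (x::'a)) = top \<longleftrightarrow> pcomp x = bot"
proof
  assume "pcomp (pcomp x) = top"
  hence "pcomp (pcomp (pcomp x)) = pcomp top" by simp
  also have "pcomp (top::'a) = bot" using pc_inf1[of top] by simp
  finally show "pcomp x = bot" by (simp add: pc3)
qed (simp add: pc_bot)

lemma pp_in_B: "pcomp (pcomp (x::'a)) \<in> booleanization"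
  unfolding booleanization_def by (simp add: pc3)

lemma join_B: "is_join_in booleanization S x \<longleftrightarrow> x = pcomp (pcomp (Sup (S::'a set)))"
proof -
  have "is_join_in booleanization S (pcomp (pcomp (Sup S)))"
    unfolding is_join_in_def
  proof (intro conjI ballI impI)
    show "pcomp (pcomp (Sup S)) \<in> booleanization" by (rule pp_in_B)
    fix s assume "s \<in> S"
    thus "s \<le> pcomp (pcomp (Sup S))" by (meson Sup_upper order_trans pc_incr)
  next
    fix y assume y: "y \<in> booleanization" "\<forall>s\<in>S. s \<le> y"
    hence "Sup S \<le> y" by (simp add: Sup_least)
    hence "pcomp (pcomp (Sup S)) \<le> pcomp (pcomp y)" by (rule pp_mono)
    thus "pcomp (pcomp (Sup S)) \<le> y" using y(1) unfolding booleanization_def by simp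
  qed
  thus ?thesis using join_unique by blast
qed

lemma Hbar_iff: "((u,d) \<in> (Hbar::'a gen_assign set)) \<longleftrightarrow>
   (\<forall>r s. s \<le> r \<longrightarrow> inf (u r) (d s) = bot) \<and> (\<forall>r. u r = Sup {u s |s. s > r}) \<and>
   (\<forall>s. d s = Sup {d r |r. r < s}) \<and>
   (\<forall>r s. r < s \<longrightarrow> pcomp (u r) \<le> d s \<and> pcomp (d s) \<le> u r)"
  by (simp add: Hbar_def ICbar_def join_UNIV)

lemma Cbar_iff: "((U,D) \<in> Cbar (booleanization::'a set)) \<longleftrightarrow>
   (\<forall>r. U r \<in> booleanization) \<and> (\<forall>s. D s \<in> booleanization) \<and>
   (\<forall>r s. s \<le> r \<longrightarrow> inf (U r) (D s) = bot) \<and>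
   (\<forall>r. U r = pcomp (pcomp (Sup {U s |s. s > r}))) \<and>
   (\<forall>s. D s = pcomp (pcomp (Sup {D r |r. r < s}))) \<and>
   (\<forall>r s. r < s \<longrightarrow> inf (pcomp (U r)) (pcomp (D s)) = bot)"
proof -
  have "is_join_in booleanization {a, b} (top::'a) \<longleftrightarrow> inf (pcomp a) (pcomp b) = bot" for a b
  proof -
    have "is_join_in booleanization {a, b} (top::'a) \<longleftrightarrow> pcomp (pcomp (sup a b)) = top"
      by (auto simp: join_B)
    thus ?thesis using pp_top_iff[of "sup a b"] unfolding pc_sup by simp
  qed
  thus ?thesis by (simp add: Cbar_def ICbar_def join_B)
qed

lemma pp_Sup_pp: "pcomp (pcomp (Sup {pcomp (pcomp (f s)) |s. P s})) = pcomp (pcomp (Sup {(f s::'a) |s. P s}))"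
proof (rule antisym)
  have "Sup {pcomp (pcomp (f s)) |s. P s} \<le> pcomp (pcomp (Sup {(f s::'a) |s. P s}))"
    by (rule Sup_least) (auto intro!: pp_mono Sup_upper)
  hence "pcomp (pcomp (Sup {pcomp (pcomp (f s)) |s. P s})) \<le> pcomp (pcomp (pcomp (pcomp (Sup {(f s::'a) |s. P s}))))"
    by (rule pp_mono)
  thus "pcomp (pcomp (Sup {pcomp (pcomp (f s)) |s. P s})) \<le> pcomp (pcomp (Sup {(f s::'a) |s. P s}))"
    by (simp add: pc3)
next
  have "Sup {(f s::'a) |s. P s} \<le> Sup {pcomp (pcomp (f s)) |s. P s}"
    by (rule Sup_mono) (auto intro: pc_incr)
  thus "pcomp (pcomp (Sup {(f s::'a) |s. P s})) \<le> pcomp (pcomp (Sup {pcomp (pcomp (f s)) |s. P s}))"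
    by (rule pp_mono)
qed

lemma H_A: assumes "(u,d) \<in> (Hbar::'a gen_assign set)" shows "u r = Sup {pcomp (d t) |t. r < t}"
proof -
  have h: "\<forall>r s. s \<le> r \<longrightarrow> inf (u r) (d s) = bot" "u r = Sup {u s |s. s > r}"
     "\<forall>r s. r < s \<longrightarrow> pcomp (u r) \<le> d s \<and> pcomp (d s) \<le> u r"
    using assms unfolding Hbar_iff by blast+
  have "Sup {u s |s. s > r} \<le> Sup {pcomp (d t) |t. r < t}"
    by (rule Sup_mono) (use h(1) in \<open>auto simp: pc_iff\<close>)
  moreover have "Sup {pcomp (d t) |t. r < t} \<le> u r"
    by (rule Sup_least) (use h(3) in auto)
  ultimately show ?thesis using h(2) by (intro antisym) simp_all
qed

lemma H_B: assumes "(u,d) \<in> (Hbar::'a gen_assign set)" shows "d s = Sup {pcomp (u t) |t. t < s}"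
proof -
  have h: "\<forall>r s. s \<le> r \<longrightarrow> inf (u r) (d s) = bot" "d s = Sup {d r |r. r < s}"
     "\<forall>r s. r < s \<longrightarrow> pcomp (u r) \<le> d s \<and> pcomp (d s) \<le> u r"
    using assms unfolding Hbar_iff by blast+
  have "Sup {d r |r. r < s} \<le> Sup {pcomp (u t) |t. t < s}"
    by (rule Sup_mono) (use h(1) in \<open>auto simp: pc_iff inf_commute\<close>)
  moreover have "Sup {pcomp (u t) |t. t < s} \<le> d s"
    by (rule Sup_least) (use h(3) in auto)
  ultimately show ?thesis using h(2) by (intro antisym) simp_all
qed

lemma phi_H: assumes "(u,d) \<in> (Hbar::'a gen_assign set)" shows "phi (u,d) \<in> Cbar booleanization"
proof -
  have h: "\<forall>r s. s \<le> r \<longrightarrow> inf (u r) (d s) = bot" "\<forall>r. u r = Sup {u s |s. s > r}"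
     "\<forall>s. d s = Sup {d r |r. r < s}"
     "\<forall>r s. r < s \<longrightarrow> pcomp (u r) \<le> d s \<and> pcomp (d s) \<le> u r"
    using assms unfolding Hbar_iff by blast+
  have last: "inf (pcomp (u r)) (pcomp (d s)) = bot" if "r < s" for r s
  proof -
    have "inf (pcomp (u r)) (pcomp (d s)) \<le> inf (d s) (pcomp (d s))"
      using h(4) that by (meson inf_mono order_refl)
    thus ?thesis using pc_inf1[of "d s"] by (simp add: bot_unique)
  qed
  show ?thesis unfolding phi_def fst_conv snd_conv Cbar_iff
    using pp_in_B pc_disj h(1) last
    by (simp add: pc3 pp_Sup_pp flip: h(2) h(3))
qed

lemma psi_C: assumes "(U,D) \<in> Cbar (booleanization::'a set)" shows "psi (U,D) \<in> Hbar"
proof -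
  have h: "\<forall>r. U r \<in> booleanization" "\<forall>s. D s \<in> booleanization"
   "\<forall>r s. s \<le> r \<longrightarrow> inf (U r) (D s) = bot"
   "\<forall>r. U r = pcomp (pcomp (Sup {U s |s. s > r}))"
   "\<forall>s. D s = pcomp (pcomp (Sup {D r |r. r < s}))"
   "\<forall>r s. r < s \<longrightarrow> inf (pcomp (U r)) (pcomp (D s)) = bot"
    using assms unfolding Cbar_iff by blast+
  have Ub: "pcomp (pcomp (U r)) = U r" for r
  proof -
    have "U r \<in> booleanization" using h(1) by blast
    hence "U r = pcomp (pcomp (U r))" unfolding booleanization_def by (rule CollectD)
    thus ?thesis by (rule sym)
  qed
  have Db: "pcomp (pcomp (D r)) = D r" for r
  proof -
    have "D r \<in> booleanization" using h(2) by blast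
    hence "D r = pcomp (pcomp (D r))" unfolding booleanization_def by (rule CollectD)
    thus ?thesis by (rule sym)
  qed
  have c1: "pcomp (D t) \<le> U r" if "r < t" for r t
    using h(6) that pc_iff[of "pcomp (D t)" "pcomp (U r)"] Ub[of r] by (simp add: inf_commute)
  have c2: "pcomp (U t) \<le> D s" if "t < s" for t s
    using h(6) that pc_iff[of "pcomp (U t)" "pcomp (D s)"] Db[of s] by simp
  have c3: "U t \<le> pcomp (D t)" "D t \<le> pcomp (U t)" for t
    using h(3) by (auto simp: pc_iff inf_commute)
  define u where "u r = Sup {pcomp (D t) |t. r < t}" for r
  define d where "d s = Sup {pcomp (U t) |t. t < s}" for s
  have psi_eq: "psi (U,D) = (u,d)" by (simp add: psi_def fun_eq_iff u_def d_def)
  have umono: "u r' \<le> u r" if "r \<le> r'" for r r'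
    unfolding u_def using that by (intro Sup_subset_mono) auto
  have dmono: "d s \<le> d s'" if "s \<le> s'" for s s'
    unfolding d_def using that by (intro Sup_subset_mono) auto
  have r1: "inf (u r) (d s) = bot" if "s \<le> r" for r s
  proof -
    have "d s \<le> pcomp (u r)" unfolding d_def
    proof (rule Sup_least)
      fix x assume "x \<in> {pcomp (U t) |t. t < s}"
      then obtain t' where x: "x = pcomp (U t')" "t' < s" by auto
      have "\<forall>y\<in>{pcomp (D t) |t. r < t}. x \<le> pcomp y"
      proof
        fix y assume "y \<in> {pcomp (D t) |t. r < t}"
        then obtain t where t: "y = pcomp (D t)" "r < t" by blast
        have "t' < t" using x(2) that t(2) by linarith
        hence "x \<le> D t" using c2 x(1) by blast
        thus "x \<le> pcomp y" using t(1) Db[of t] by simp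
      qed
      thus "x \<le> pcomp (u r)" unfolding u_def by (simp add: pc_Sup_iff)
    qed
    thus ?thesis by (simp add: pc_iff inf_commute)
  qed
  have r3: "u r = Sup {u s |s. s > r}" for r
  proof (rule antisym)
    show "u r \<le> Sup {u s |s. s > r}" unfolding u_def[of r]
    proof (rule Sup_least)
      fix x assume "x \<in> {pcomp (D t) |t. r < t}"
      then obtain t where x: "x = pcomp (D t)" "r < t" by auto
      then obtain m where m: "r < m" "m < t" using dense[OF x(2)] by blast
      have "x \<in> {pcomp (D t) |t. m < t}" using x m by blast
      hence "x \<le> u m" unfolding u_def by (rule Sup_upper)
      also have "u m \<le> Sup {u s |s. s > r}" using m by (intro Sup_upper) blast
      finally show "x \<le> Sup {u s |s. s > r}" .
    qed
    show "Sup {u s |s. s > r} \<le> u r" by (rule Sup_least) (auto intro: umono)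
  qed
  have r4: "d s = Sup {d r |r. r < s}" for s
  proof (rule antisym)
    show "d s \<le> Sup {d r |r. r < s}" unfolding d_def[of s]
    proof (rule Sup_least)
      fix x assume "x \<in> {pcomp (U t) |t. t < s}"
      then obtain t where x: "x = pcomp (U t)" "t < s" by auto
      then obtain m where m: "t < m" "m < s" using dense[OF x(2)] by blast
      have "x \<in> {pcomp (U t) |t. t < m}" using x m by blast
      hence "x \<le> d m" unfolding d_def by (rule Sup_upper)
      also have "d m \<le> Sup {d r |r. r < s}" using m by (intro Sup_upper) blast
      finally show "x \<le> Sup {d r |r. r < s}" .
    qed
    show "Sup {d r |r. r < s} \<le> d s" by (rule Sup_least) (auto intro: dmono)
  qed
  have hc: "pcomp (u r) \<le> d s \<and> pcomp (d s) \<le> u r" if "r < s" for r s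
  proof -
    obtain m where m: "r < m" "m < s" using dense[OF \<open>r < s\<close>] by blast
    have "pcomp (D m) \<le> u r" unfolding u_def using m by (auto intro: Sup_upper)
    hence "U m \<le> u r" using c3(1)[of m] by simp
    hence "pcomp (u r) \<le> pcomp (U m)" by (rule pc_anti)
    also have "pcomp (U m) \<le> d s" unfolding d_def using m by (auto intro: Sup_upper)
    finally have A: "pcomp (u r) \<le> d s" .
    have "pcomp (U m) \<le> d s" unfolding d_def using m by (auto intro: Sup_upper)
    hence "D m \<le> d s" using c3(2)[of m] by simp
    hence "pcomp (d s) \<le> pcomp (D m)" by (rule pc_anti)
    also have "pcomp (D m) \<le> u r" unfolding u_def using m by (auto intro: Sup_upper)
    finally show ?thesis using A by simp
  qed
  show ?thesis unfolding psi_eq Hbar_iff using r1 r3 r4 hc by blast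
qed

lemma psi_phi: assumes "(u,d) \<in> (Hbar::'a gen_assign set)" shows "psi (phi (u,d)) = (u,d)"
proof -
  have "psi (phi (u,d)) = (\<lambda>r. Sup {pcomp (d t) |t. r < t}, \<lambda>s. Sup {pcomp (u t) |t. t < s})"
    by (simp add: psi_def phi_def pc3)
  also have "(\<lambda>r. Sup {pcomp (d t) |t. r < t}) = u"
    by (rule ext, rule sym, rule H_A[OF assms])
  also have "(\<lambda>s. Sup {pcomp (u t) |t. t < s}) = d"
    by (rule ext, rule sym, rule H_B[OF assms])
  finally show ?thesis .
qed

lemma phi_psi: assumes "(U,D) \<in> Cbar (booleanization::'a set)" shows "phi (psi (U,D)) = (U,D)"
proof -
  have h: "\<forall>r. U r \<in> booleanization" "\<forall>s. D s \<in> booleanization"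
   "\<forall>r s. s \<le> r \<longrightarrow> inf (U r) (D s) = bot"
   "\<forall>r. U r = pcomp (pcomp (Sup {U s |s. s > r}))"
   "\<forall>s. D s = pcomp (pcomp (Sup {D r |r. r < s}))"
   "\<forall>r s. r < s \<longrightarrow> inf (pcomp (U r)) (pcomp (D s)) = bot"
    using assms unfolding Cbar_iff by blast+
  have Ub: "pcomp (pcomp (U r)) = U r" for r
  proof -
    have "U r \<in> booleanization" using h(1) by blast
    hence "U r = pcomp (pcomp (U r))" unfolding booleanization_def by (rule CollectD)
    thus ?thesis by (rule sym)
  qed
  have Db: "pcomp (pcomp (D r)) = D r" for r
  proof -
    have "D r \<in> booleanization" using h(2) by blast
    hence "D r = pcomp (pcomp (D r))" unfolding booleanization_def by (rule CollectD)
    thus ?thesis by (rule sym)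
  qed
  have c1: "pcomp (D t) \<le> U r" if "r < t" for r t
    using h(6) that pc_iff[of "pcomp (D t)" "pcomp (U r)"] Ub[of r] by (simp add: inf_commute)
  have c2: "pcomp (U t) \<le> D s" if "t < s" for t s
    using h(6) that pc_iff[of "pcomp (U t)" "pcomp (D s)"] Db[of s] by simp
  have c3: "U t \<le> pcomp (D t)" "D t \<le> pcomp (U t)" for t
    using h(3) by (auto simp: pc_iff inf_commute)
  have e1: "pcomp (pcomp (Sup {pcomp (D t) |t. r < t})) = U r" for r
  proof (rule antisym)
    have "Sup {pcomp (D t) |t. r < t} \<le> U r" by (rule Sup_least) (auto intro: c1)
    hence "pcomp (pcomp (Sup {pcomp (D t) |t. r < t})) \<le> pcomp (pcomp (U r))" by (rule pp_mono)
    thus "pcomp (pcomp (Sup {pcomp (D t) |t. r < t})) \<le> U r" by (simp only: Ub)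
    have "Sup {U s |s. s > r} \<le> Sup {pcomp (D t) |t. r < t}"
      by (rule Sup_mono) (auto intro: c3)
    hence "pcomp (pcomp (Sup {U s |s. s > r})) \<le> pcomp (pcomp (Sup {pcomp (D t) |t. r < t}))"
      by (rule pp_mono)
    moreover have eq: "U r = pcomp (pcomp (Sup {U s |s. s > r}))" using h(4) by blast
    ultimately show "U r \<le> pcomp (pcomp (Sup {pcomp (D t) |t. r < t}))" by (rule ord_eq_le_trans[rotated])
  qed
  have e2: "pcomp (pcomp (Sup {pcomp (U t) |t. t < s})) = D s" for s
  proof (rule antisym)
    have "Sup {pcomp (U t) |t. t < s} \<le> D s" by (rule Sup_least) (auto intro: c2)
    hence "pcomp (pcomp (Sup {pcomp (U t) |t. t < s})) \<le> pcomp (pcomp (D s))" by (rule pp_mono)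
    thus "pcomp (pcomp (Sup {pcomp (U t) |t. t < s})) \<le> D s" by (simp only: Db)
    have "Sup {D r |r. r < s} \<le> Sup {pcomp (U t) |t. t < s}"
      by (rule Sup_mono) (auto intro: c3)
    hence "pcomp (pcomp (Sup {D r |r. r < s})) \<le> pcomp (pcomp (Sup {pcomp (U t) |t. t < s}))"
      by (rule pp_mono)
    moreover have eq: "D s = pcomp (pcomp (Sup {D r |r. r < s}))" using h(5) by blast
    ultimately show "D s \<le> pcomp (pcomp (Sup {pcomp (U t) |t. t < s}))" by (rule ord_eq_le_trans[rotated])
  qed
  show ?thesis by (simp add: psi_def phi_def fun_eq_iff e1 e2)
qed

lemma phi_order: assumes "(u,d) \<in> (Hbar::'a gen_assign set)" "(u',d') \<in> (Hbar::'a gen_assign set)"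
  shows "ic_le (u,d) (u',d') \<longleftrightarrow> ic_le (phi (u,d)) (phi (u',d'))"
proof
  assume "ic_le (u,d) (u',d')"
  thus "ic_le (phi (u,d)) (phi (u',d'))" unfolding ic_le_def phi_def by (simp add: pp_mono)
next
  assume a: "ic_le (phi (u,d)) (phi (u',d'))"
  have 1: "pcomp (d t) \<le> pcomp (d' t)" for t
    using a pc_anti[of "pcomp (pcomp (d' t))" "pcomp (pcomp (d t))"] unfolding ic_le_def phi_def
    by (simp add: pc3)
  have 2: "pcomp (u' t) \<le> pcomp (u t)" for t
    using a pc_anti[of "pcomp (pcomp (u t))" "pcomp (pcomp (u' t))"] unfolding ic_le_def phi_def
    by (simp add: pc3)
  have "u r \<le> u' r" for r
    unfolding H_A[OF assms(1), of r] H_A[OF assms(2), of r]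
    by (rule Sup_mono) (auto intro: 1)
  moreover have "d' s \<le> d s" for s
    unfolding H_B[OF assms(1), of s] H_B[OF assms(2), of s]
    by (rule Sup_mono) (auto intro: 2)
  ultimately show "ic_le (u,d) (u',d')" unfolding ic_le_def by simp
qed

lemma psi_phi': "f \<in> (Hbar::'a gen_assign set) \<Longrightarrow> psi (phi f) = f"
  using psi_phi by (cases f) simp

lemma phi_psi': "g \<in> Cbar (booleanization::'a set) \<Longrightarrow> phi (psi g) = g"
  using phi_psi by (cases g) simp

lemma phi_H': "f \<in> (Hbar::'a gen_assign set) \<Longrightarrow> phi f \<in> Cbar booleanization"
  using phi_H by (cases f) simp

lemma psi_C': "g \<in> Cbar (booleanization::'a set) \<Longrightarrow> psi g \<in> Hbar"
  using psi_C by (cases g) simp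

lemma phi_order': "f \<in> (Hbar::'a gen_assign set) \<Longrightarrow> g \<in> Hbar \<Longrightarrow> ic_le f g \<longleftrightarrow> ic_le (phi f) (phi g)"
  using phi_order by (cases f, cases g) simp

end

theorem proposition3p9:
  assumes "frame_law TYPE('a::complete_lattice)"
  shows "order_isomorphic (Hbar :: 'a gen_assign set) (Cbar (booleanization :: 'a set))"
  unfolding order_isomorphic_def
proof (intro exI conjI)
  show "bij_betw phi (Hbar :: 'a gen_assign set) (Cbar booleanization)"
  proof (rule bij_betw_byWitness[where f' = psi])
    show "\<forall>a\<in>(Hbar :: 'a gen_assign set). psi (phi a) = a" using psi_phi'[OF assms] by blast
    show "\<forall>a\<in>Cbar (booleanization :: 'a set). phi (psi a) = a" using phi_psi'[OF assms] by blast
    show "phi ` (Hbar :: 'a gen_assign set) \<subseteq> Cbar booleanization" using phi_H'[OF assms] by blast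
    show "psi ` Cbar (booleanization :: 'a set) \<subseteq> Hbar" using psi_C'[OF assms] by blast
  qed
  show "\<forall>f\<in>(Hbar :: 'a gen_assign set). \<forall>g\<in>Hbar. ic_le f g = ic_le (phi f) (phi g)"
    using phi_order'[OF assms] by blast
qed

end
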